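(* Let $L=8$ and let $B=2^s\ge 8$. Let $\alpha_0,\dots,\alpha_{B-1}$ be nonzero real LLRs of one list path at a single parity-check (SPC) constituent block, indexed so that $|\alpha_0|<|\alpha_1|<\cdots<|\alpha_{B-1}|$, and let $\beta\in\{0,1\}^B$ with $\beta_j=\frac{1-\mathrm{sgn}(\alpha_j)}{2}$. For an even-weight vector $\hat\beta\in\{0,1\}^B$ (a codeword of the SPC block) define $\Delta(\hat\beta)=\sum_{j=0}^{B-1}|\hat\beta_j-\beta_j|\,|\alpha_j|$. Define a set $\mathcal C$ of 13 even-weight vectors as follows. If $\sum_j\beta_j\equiv 0\pmod 2$: $\mathcal C$ consists of $\beta$; $\beta\oplus e_0\oplus e_t$ for $t=1,\dots,7$; $\beta\oplus e_1\oplus e_2$; $\beta\oplus e_1\oplus e_3$; $\beta\oplus e_1\oplus e_4$; $\beta\oplus e_2\oplus e_3$; $\beta\oplus e_0\oplus e_1\oplus e_2\oplus e_3$. If $\sum_j\beta_j\equiv 1\pmod 2$: $\mathcal C$ consists of $\beta\oplus e_t$ for $t=0,\dots,7$; $\beta\oplus e_0\oplus e_1\oplus e_2$; $\beta\oplus e_0\oplus e_1\oplus e_3$; $\beta\oplus e_0\oplus e_2\oplus e_3$; $\beta\oplus e_1\oplus e_2\oplus e_3$; $\beta\oplus e_0\oplus e_1\oplus e_4$. Then the $L=8$ surviving sub-paths of this path can be obtained from $\mathcal C$: there is a set $S\subseteq\mathcal C$ with $|S|=8$ such that $\Delta(v)\le\Delta(w)$ for all $v\in S$ and all even-weight $w\in\{0,1\}^B\setminus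 S$. Consequently, in one-time path extension of all 8 list paths followed by pruning to the 8 paths of smallest path metric, restricting each path's extensions to these 13 error patterns incurs no loss.
   Context: Setting: successive-cancellation list (SCL) decoding of a polar code with list size $L$. An SPC constituent block of length $B$ is one whose valid outputs are exactly the vectors $\hat\beta\in\{0,1\}^B$ with $\sum_j\hat\beta_j\equiv 0\pmod 2$. Each list path $l$ has a path metric $\mathrm{PM}^l$; extending it by block output $\hat\beta$ gives new path metric $\mathrm{PM}^l+\Delta(\hat\beta)$, and after extension the $L$ extended paths (over all parent paths) with smallest path metric survive. $e_p\in\{0,1\}^B$ has a $1$ in position $p$ (positions indexed $0,\dots,B-1$ in the sorted order above) and $0$ elsewhere; $\oplus$ is componentwise XOR. *)

theory Defs
  imports Complex_Main
begin

text \<open>Binary vectors of length B are modelled as functions nat => bool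
  that vanish (are False) outside positions 0..B-1; True means bit 1.\<close>

definition binvecs :: "nat \<Rightarrow> (nat \<Rightarrow> bool) set" where
  "binvecs B = {v. \<forall>j\<ge>B. \<not> v j}"

definition hweight :: "nat \<Rightarrow> (nat \<Rightarrow> bool) \<Rightarrow> nat" where
  "hweight B v = card {j. j < B \<and> v j}"

definition spc_words :: "nat \<Rightarrow> (nat \<Rightarrow> bool) set" where
  "spc_words B = {v \<in> binvecs B. even (hweight B v)}"

definition unitv :: "nat \<Rightarrow> nat \<Rightarrow> bool" where
  "unitv p = (\<lambda>j. j = p)"

definition xorv :: "(nat \<Rightarrow> bool) \<Rightarrow> (nat \<Rightarrow> bool) \<Rightarrow> nat \<Rightarrow> bool" (infixl "\<oplus>\<^sub>v" 65) where
  "v \<oplus>\<^sub>v w = (\<lambda>j. v j \<noteq> w j)"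

text \<open>Hard decision: beta_j = (1 - sgn alpha_j)/2, i.e. 1 iff alpha_j < 0.\<close>
definition hard_dec :: "nat \<Rightarrow> (nat \<Rightarrow> real) \<Rightarrow> nat \<Rightarrow> bool" where
  "hard_dec B \<alpha> = (\<lambda>j. j < B \<and> \<alpha> j < 0)"

definition Delta :: "nat \<Rightarrow> (nat \<Rightarrow> real) \<Rightarrow> (nat \<Rightarrow> bool) \<Rightarrow> real" where
  "Delta B \<alpha> v = (\<Sum>j<B. (if v j \<noteq> hard_dec B \<alpha> j then 1 else 0) * \<bar>\<alpha> j\<bar>)"

text \<open>The 13 candidate error patterns (lists of flipped positions).\<close>
definition patterns_even :: "nat list list" where
  "patterns_even = [[]] @ map (\<lambda>t. [0, t]) [1..<8] @
     [[1,2],[1,3],[1,4],[2,3],[0,1,2,3]]"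

definition patterns_odd :: "nat list list" where
  "patterns_odd = map (\<lambda>t. [t]) [0..<8] @
     [[0,1,2],[0,1,3],[0,2,3],[1,2,3],[0,1,4]]"

definition apply_pattern :: "(nat \<Rightarrow> bool) \<Rightarrow> nat list \<Rightarrow> nat \<Rightarrow> bool" where
  "apply_pattern v ps = foldl (\<lambda>w p. w \<oplus>\<^sub>v unitv p) v ps"

definition candC :: "nat \<Rightarrow> (nat \<Rightarrow> real) \<Rightarrow> (nat \<Rightarrow> bool) set" where
  "candC B \<alpha> = (let \<beta> = hard_dec B \<alpha> in
     if even (hweight B \<beta>) then apply_pattern \<beta> ` set patterns_even
     else apply_pattern \<beta> ` set patterns_odd)"

end

theory Submission
  imports Defs
begin


lemma apply_pattern_distinct:
  "distinct ps \<Longrightarrow> apply_pattern v ps = (\<lambda>j. v j \<noteq> (j \<in> set ps))"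
proof (induction ps arbitrary: v)
  case Nil thus ?case by (simp add: apply_pattern_def)
next
  case (Cons p ps)
  have "apply_pattern v (p # ps) = apply_pattern (v \<oplus>\<^sub>v unitv p) ps"
    by (simp add: apply_pattern_def)
  also have "\<dots> = (\<lambda>j. (v \<oplus>\<^sub>v unitv p) j \<noteq> (j \<in> set ps))" using Cons by simp
  finally show ?case using Cons.prems by (auto simp: xorv_def unitv_def)
qed


lemma select_low:
  fixes f :: "'a \<Rightarrow> real"
  assumes "finite K" "k \<le> card K"
  shows "\<exists>S\<subseteq>K. card S = k \<and> (\<forall>x\<in>S. \<forall>y\<in>K-S. f x \<le> f y)"
  using assms(2)
proof (induction k)
  case 0 
  have "{} \<subseteq> K \<and> card {} = (0::nat) \<and> (\<forall>x\<in>{}. \<forall>y\<in>K-{}. f x \<le> f y)" by simp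
  thus ?case by blast
next
  case (Suc k)
  have "k \<le> card K" using Suc.prems by simp
  then obtain S where S: "S \<subseteq> K" "card S = k" "\<forall>x\<in>S. \<forall>y\<in>K-S. f x \<le> f y"
    using Suc.IH by blast
  have fin: "finite (K - S)" using assms(1) by simp
  have fS: "finite S" using S(1) assms(1) by (rule finite_subset)
  have "card (K - S) = card K - card S" using fS S(1) by (rule card_Diff_subset)
  then have "card (K - S) > 0" using Suc.prems S(2) by simp
  then have nem: "K - S \<noteq> {}" by (simp add: card_gt_0_iff)
  have fi: "finite (f ` (K - S))" using fin by simp
  have ne: "f ` (K - S) \<noteq> {}" using nem by simp
  have "Min (f ` (K - S)) \<in> f ` (K - S)" using Min_in[OF fi ne] .
  then obtain m where m1: "m \<in> K - S" and m2: "f m = Min (f ` (K - S))" by (auto simp del: Min_in)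
  have m3: "\<forall>y\<in>K-S. f m \<le> f y" unfolding m2 using fi by simp
  have "card (insert m S) = Suc k" using fS m1 S(2) by simp
  moreover have "insert m S \<subseteq> K" using m1 S(1) by blast
  moreover have "\<forall>x\<in>insert m S. \<forall>y\<in>K - insert m S. f x \<le> f y" using m3 S(3) by blast
  ultimately show ?case by blast
qed

lemma dom_lemma:
  fixes f :: "'a \<Rightarrow> real"
  assumes "finite C" "S \<subseteq> C" "card S = 8" "\<forall>x\<in>S. \<forall>y\<in>C-S. f x \<le> f y"
    "D \<subseteq> C" "card D = 8" "\<forall>d\<in>D. f d \<le> f w" "x \<in> S"
  shows "f x \<le> f w"
proof (cases "D \<subseteq> S")
  case True
  have fS: "finite S" using assms(1,2) by (rule finite_subset[rotated])
  have "D = S" using card_subset_eq[OF fS True] assms(3,6) by simp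
  thus ?thesis using assms(7,8) by blast
next
  case False
  then obtain d where d: "d \<in> D" "d \<notin> S" by blast
  then have "d \<in> C - S" using assms(5) by blast
  then have "f x \<le> f d" using assms(4,8) by blast
  also have "f d \<le> f w" using assms(7) d(1) by blast
  finally show ?thesis .
qed

lemma sum_low:
  fixes a :: "nat \<Rightarrow> real"
  assumes mono: "\<And>i j. i \<le> j \<Longrightarrow> j < B \<Longrightarrow> a i \<le> a j"
  shows "finite E \<Longrightarrow> E \<subseteq> {..<B} \<Longrightarrow> card E = n \<Longrightarrow> sum a {..<n} \<le> sum a E"
proof (induction n arbitrary: E)
  case 0 thus ?case by simp
next
  case (Suc n)
  then have ne: "E \<noteq> {}" by auto
  define m where "m = Max E"
  have mE: "m \<in> E" using ne Suc.prems(1) m_def by simp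
  have "E \<subseteq> {..m}" using Suc.prems(1) m_def by auto
  then have "card E \<le> Suc m" using card_mono[of "{..m}" E] by simp
  then have nm: "n \<le> m" using Suc.prems(3) by simp
  have mB: "m < B" using mE Suc.prems(2) by auto
  have c: "card (E - {m}) = n" using Suc.prems(3) mE Suc.prems(1) by simp
  have IH: "sum a {..<n} \<le> sum a (E - {m})" using Suc.IH[of "E - {m}"] Suc.prems c by auto
  have "sum a E = sum a (E - {m}) + a m" using mE Suc.prems(1) by (simp add: sum.remove)
  moreover have "a n \<le> a m" using mono nm mB by simp
  ultimately show ?case using IH by simp
qed




lemma delta_word:
  assumes "w \<in> binvecs B"
  shows "Delta B al w = sum (\<lambda>j. \<bar>al j\<bar>) {j. j < B \<and> w j \<noteq> hard_dec B al j}"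
proof -
  have "Delta B al w = (\<Sum>j<B. if w j \<noteq> hard_dec B al j then \<bar>al j\<bar> else 0)"
    unfolding Delta_def by (intro sum.cong) auto
  also have "\<dots> = sum (\<lambda>j. \<bar>al j\<bar>) ({..<B} \<inter> {j. w j \<noteq> hard_dec B al j})"
    by (simp add: sum.inter_restrict)
  also have "{..<B} \<inter> {j. w j \<noteq> hard_dec B al j} = {j. j < B \<and> w j \<noteq> hard_dec B al j}" by auto
  finally show ?thesis .
qed

lemma pattern_binvec:
  assumes "distinct ps" "set ps \<subseteq> {..<B}"
  shows "apply_pattern (hard_dec B al) ps \<in> binvecs B"
  using assms by (auto simp: apply_pattern_distinct binvecs_def hard_dec_def)

lemma delta_pattern:
  assumes "distinct ps" "set ps \<subseteq> {..<B}"
  shows "Delta B al (apply_pattern (hard_dec B al) ps) = sum (\<lambda>j. \<bar>al j\<bar>) (set ps)"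
proof -
  have "{j. j < B \<and> apply_pattern (hard_dec B al) ps j \<noteq> hard_dec B al j} = set ps"
    using assms by (auto simp: apply_pattern_distinct)
  thus ?thesis using delta_word[OF pattern_binvec[OF assms]] by simp
qed

lemma word_is_pattern:
  assumes "w \<in> binvecs B" "{j. j < B \<and> w j \<noteq> hard_dec B al j} = set ps" "distinct ps"
  shows "w = apply_pattern (hard_dec B al) ps"
proof
  fix j
  show "w j = apply_pattern (hard_dec B al) ps j"
  proof (cases "j < B")
    case True thus ?thesis using assms by (auto simp: apply_pattern_distinct)
  next
    case False
    then have "j \<notin> set ps" using assms(2) by auto
    thus ?thesis using assms False by (auto simp: apply_pattern_distinct binvecs_def hard_dec_def)
  qed
qed

lemma parity:
  fixes w v :: "nat \<Rightarrow> bool"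
  shows "even (card {j. j < B \<and> w j \<noteq> v j}) \<longleftrightarrow> (even (hweight B w) \<longleftrightarrow> even (hweight B v))"
proof -
  let ?W = "{j. j < B \<and> w j}" and ?V = "{j. j < B \<and> v j}"
  have fW: "finite ?W" "finite ?V" by auto
  have e: "{j. j < B \<and> w j \<noteq> v j} = (?W \<union> ?V) - (?W \<inter> ?V)" by auto
  have c1: "card (?W \<union> ?V) + card (?W \<inter> ?V) = card ?W + card ?V"
    using card_Un_Int[OF fW] by simp
  have c2: "card {j. j < B \<and> w j \<noteq> v j} = card (?W \<union> ?V) - card (?W \<inter> ?V)"
    unfolding e by (rule card_Diff_subset) (auto)
  have c3: "card (?W \<inter> ?V) \<le> card (?W \<union> ?V)" by (rule card_mono) auto
  show ?thesis unfolding hweight_def using c1 c2 c3 by presburger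
qed



lemma sub_low:
  fixes a :: "nat \<Rightarrow> real"
  assumes nn: "\<And>j. 0 \<le> a j" and mono: "\<And>i j. i \<le> j \<Longrightarrow> j < B \<Longrightarrow> a i \<le> a j"
    and "P \<subseteq> {..<n}" "n \<le> card E" "finite E" "E \<subseteq> {..<B}"
  shows "sum a P \<le> sum a E"
proof -
  have "sum a P \<le> sum a {..<n}" using assms(3) nn by (intro sum_mono2) auto
  also have "\<dots> \<le> sum a {..<card E}" using assms(4) nn by (intro sum_mono2) auto
  also have "\<dots> \<le> sum a E" by (rule sum_low[OF mono assms(5) assms(6) refl])
  finally show ?thesis .
qed

lemma two_elems:
  fixes E :: "nat set"
  assumes "finite E" "card E = 2"
  obtains i j where "i < j" "E = {i, j}"
proof -
  let ?xs = "sorted_list_of_set E"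
  have l: "length ?xs = 2" using assms by simp
  then obtain i j where xs: "?xs = [i, j]"
    using l by (cases ?xs; cases "tl ?xs"; auto)
  have "sorted_wrt (<) ?xs" by (rule strict_sorted_list_of_set)
  then have "i < j" using xs by simp
  moreover have "E = {i, j}" using set_sorted_list_of_set[OF assms(1)] xs by simp
  ultimately show ?thesis using that by blast
qed

lemma three_elems:
  fixes E :: "nat set"
  assumes "finite E" "card E = 3"
  obtains i j k where "i < j" "j < k" "E = {i, j, k}"
proof -
  let ?xs = "sorted_list_of_set E"
  have l: "length ?xs = 3" using assms by simp
  then obtain i j k where xs: "?xs = [i, j, k]"
    using l by (cases ?xs; cases "tl ?xs"; cases "tl (tl ?xs)"; auto)
  have "sorted_wrt (<) ?xs" by (rule strict_sorted_list_of_set)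
  then have "i < j" "j < k" using xs by simp_all
  moreover have "E = {i, j, k}" using set_sorted_list_of_set[OF assms(1)] xs by simp
  ultimately show ?thesis using that by blast
qed

lemma core_even:
  fixes a :: "nat \<Rightarrow> real"
  assumes nn: "\<And>j. 0 \<le> a j" and mono: "\<And>i j. i \<le> j \<Longrightarrow> j < B \<Longrightarrow> a i \<le> a j"
    and B8: "B \<ge> 8" and EB: "E \<subseteq> {..<B}" and ev: "even (card E)"
  shows "(\<exists>p\<in>set patterns_even. E = set p) \<or>
         (\<exists>Ps. set Ps \<subseteq> set patterns_even \<and> length Ps = 8 \<and> distinct Ps \<and>
               (\<forall>p\<in>set Ps. sum a (set p) \<le> sum a E))"
proof -
  have fin: "finite E" using EB finite_subset by blast
  have "card E = 0 \<or> card E = 2 \<or> card E \<ge> 4" using ev by presburger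
  then consider "card E = 0" | "card E = 2" | "card E \<ge> 4" by metis
  then show ?thesis
  proof cases
    case 1
    then have "E = set []" using fin by simp
    thus ?thesis by (auto simp: patterns_even_def)
  next
    case 2
    then obtain i j where ij: "i < j" "E = {i, j}" using two_elems fin by blast
    have jB: "j < B" using EB ij by auto
    have sE: "sum a E = a i + a j" using ij by simp
    consider "i = 0" "j \<le> 7" | "i = 0" "j \<ge> 8" | "i \<ge> 1" "j \<le> 3" | "i \<ge> 1" "j \<ge> 4" by linarith
    then show ?thesis
    proof cases
      case 1
      then have "[0, j] \<in> set patterns_even" using ij by (auto simp: patterns_even_def)
      moreover have "E = set [0, j]" using ij 1 by auto
      ultimately show ?thesis by blast
    next
      case 2
      let ?Ps = "([[],[0,1],[0,2],[0,3],[0,4],[0,5],[0,6],[0,7]] :: nat list list)"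
      have m: "\<And>t. t \<le> 7 \<Longrightarrow> a t \<le> a j" using mono 2 jB by auto
      have "\<forall>p\<in>set ?Ps. sum a (set p) \<le> sum a E" unfolding sE using 2 nn[of j] nn[of 0]
        by (auto intro!: add_mono m)
      moreover have "set ?Ps \<subseteq> set patterns_even" by (auto simp: patterns_even_def)
      moreover have "length ?Ps = 8" "distinct ?Ps" by simp_all
      ultimately show ?thesis by blast
    next
      case 3
      then have "[i, j] \<in> set patterns_even" using ij by (auto simp: patterns_even_def)
      moreover have "E = set [i, j]" using ij by auto
      ultimately show ?thesis by blast
    next
      case 4
      let ?Ps = "([[],[0,1],[0,2],[0,3],[0,4],[1,2],[1,3],[1,4]] :: nat list list)"
      have m: "\<And>t. t \<le> 4 \<Longrightarrow> a t \<le> a j" using mono 4 jB by auto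
      have m0: "a 0 \<le> a i" "a (Suc 0) \<le> a i" using mono 4 ij jB by auto
      have "\<forall>p\<in>set ?Ps. sum a (set p) \<le> sum a E" unfolding sE using nn[of j] nn[of i]
        by (auto intro!: add_mono m m0)
      moreover have "set ?Ps \<subseteq> set patterns_even" by (auto simp: patterns_even_def)
      moreover have "length ?Ps = 8" "distinct ?Ps" by simp_all
      ultimately show ?thesis by blast
    qed
  next
    case 3
    let ?Ps = "([[],[0,1],[0,2],[0,3],[1,2],[1,3],[2,3],[0,1,2,3]] :: nat list list)"
    have "\<forall>p\<in>set ?Ps. sum a (set p) \<le> sum a E"
    proof
      fix p assume "p \<in> set ?Ps"
      then have sp: "set p \<subseteq> {..<4}" by auto
      show "sum a (set p) \<le> sum a E" using sub_low[of a B "set p" 4 E, OF nn mono sp 3 fin EB] .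
    qed
    moreover have "set ?Ps \<subseteq> set patterns_even" by (auto simp: patterns_even_def)
    moreover have "length ?Ps = 8" "distinct ?Ps" by simp_all
    ultimately show ?thesis by blast
  qed
qed

lemma core_odd:
  fixes a :: "nat \<Rightarrow> real"
  assumes nn: "\<And>j. 0 \<le> a j" and mono: "\<And>i j. i \<le> j \<Longrightarrow> j < B \<Longrightarrow> a i \<le> a j"
    and B8: "B \<ge> 8" and EB: "E \<subseteq> {..<B}" and od: "odd (card E)"
  shows "(\<exists>p\<in>set patterns_odd. E = set p) \<or>
         (\<exists>Ps. set Ps \<subseteq> set patterns_odd \<and> length Ps = 8 \<and> distinct Ps \<and>
               (\<forall>p\<in>set Ps. sum a (set p) \<le> sum a E))"
proof -
  have fin: "finite E" using EB finite_subset by blast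
  have "card E = 1 \<or> card E = 3 \<or> card E \<ge> 5" using od by presburger
  then consider "card E = 1" | "card E = 3" | "card E \<ge> 5" by blast
  then show ?thesis
  proof cases
    case 1
    then obtain i where i: "E = {i}" using card_1_singletonE by blast
    have iB: "i < B" using EB i by auto
    show ?thesis
    proof (cases "i < 8")
      case True
      then have "[i] \<in> set patterns_odd" by (auto simp: patterns_odd_def)
      moreover have "E = set [i]" using i by simp
      ultimately show ?thesis by blast
    next
      case False
      let ?Ps = "map (\<lambda>t. [t]) [0..<8]"
      have m: "\<And>t. t \<le> 7 \<Longrightarrow> a t \<le> a i" using mono False iB by auto
      have "\<forall>p\<in>set ?Ps. sum a (set p) \<le> sum a E" unfolding i by (auto intro!: m)
      moreover have "set ?Ps \<subseteq> set patterns_odd" by (auto simp: patterns_odd_def)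
      moreover have "length ?Ps = 8" "distinct ?Ps" by (simp_all add: distinct_map inj_on_def)
      ultimately show ?thesis by blast
    qed
  next
    case 2
    then obtain i j k where ijk: "i < j" "j < k" "E = {i, j, k}" using three_elems fin by blast
    have kB: "k < B" using EB ijk by auto
    have sE: "sum a E = a i + a j + a k" using ijk by simp
    show ?thesis
    proof (cases "k \<le> 3")
      case True
      then have "[i, j, k] \<in> set patterns_odd" using ijk
        by (auto simp: patterns_odd_def less_Suc_eq numeral_eq_Suc)
      moreover have "E = set [i, j, k]" using ijk by auto
      ultimately show ?thesis by blast
    next
      case False
      let ?Ps = "([[0],[1],[2],[3],[4],[0,1,2],[0,1,3],[0,1,4]] :: nat list list)"
      have m: "\<And>t. t \<le> 4 \<Longrightarrow> a t \<le> a k" using mono False kB by auto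
      have m0: "a 0 \<le> a i" "a 1 \<le> a j" using mono ijk kB by auto
      have "\<forall>p\<in>set ?Ps. sum a (set p) \<le> sum a E" unfolding sE using nn[of j] nn[of i] nn[of k] m[of 0] m[of 1] m[of 2] m[of 3] m[of 4] m0
        by auto
      moreover have "set ?Ps \<subseteq> set patterns_odd" by (auto simp: patterns_odd_def)
      moreover have "length ?Ps = 8" "distinct ?Ps" by simp_all
      ultimately show ?thesis by blast
    qed
  next
    case 3
    let ?Ps = "([[0],[1],[2],[3],[4],[0,1,2],[0,1,3],[0,2,3]] :: nat list list)"
    have "\<forall>p\<in>set ?Ps. sum a (set p) \<le> sum a E"
    proof
      fix p assume "p \<in> set ?Ps"
      then have sp: "set p \<subseteq> {..<5}" by auto
      show "sum a (set p) \<le> sum a E" using sub_low[of a B "set p" 5 E, OF nn mono sp 3 fin EB] .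
    qed
    moreover have "set ?Ps \<subseteq> set patterns_odd" by (auto simp: patterns_odd_def)
    moreover have "length ?Ps = 8" "distinct ?Ps" by simp_all
    ultimately show ?thesis by blast
  qed
qed



lemma pe_expl: "patterns_even = [[],[0,1],[0,2],[0,3],[0,4],[0,5],[0,6],[0,7],[1,2],[1,3],[1,4],[2,3],[0,1,2,3]]"
  by (simp add: patterns_even_def upt_rec)

lemma po_expl: "patterns_odd = [[0],[1],[2],[3],[4],[5],[6],[7],[0,1,2],[0,1,3],[0,2,3],[1,2,3],[0,1,4]]"
  by (simp add: patterns_odd_def upt_rec)

lemma path_ok:
  fixes al :: "nat \<Rightarrow> real"
  assumes B8: "B \<ge> 8" and inc: "\<And>i j. i < j \<Longrightarrow> j < B \<Longrightarrow> \<bar>al i\<bar> < \<bar>al j\<bar>"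
  shows "\<exists>S \<subseteq> candC B al. card S = 8 \<and>
            (\<forall>v\<in>S. \<forall>w \<in> spc_words B - S. Delta B al v \<le> Delta B al w)"
proof -
  define \<beta> where "\<beta> = hard_dec B al"
  define a where "a = (\<lambda>j. \<bar>al j\<bar>)"
  define pats where "pats = (if even (hweight B \<beta>) then patterns_even else patterns_odd)"
  have Cdef: "candC B al = apply_pattern \<beta> ` set pats" by (simp add: candC_def Let_def \<beta>_def pats_def)
  have patok: "\<forall>p\<in>set pats. sorted_wrt (<) p \<and> set p \<subseteq> {..<8}"
    by (simp add: pats_def patterns_even_def patterns_odd_def)
  have pdist: "distinct pats" "length pats = 13"
    by (simp_all add: pats_def pe_expl po_expl)
  have pB: "\<And>p. p \<in> set pats \<Longrightarrow> distinct p \<and> set p \<subseteq> {..<B}"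
    using patok B8 strict_sorted_iff by fastforce
  have inj: "inj_on (apply_pattern \<beta>) (set pats)"
  proof (rule inj_onI)
    fix p q assume p: "p \<in> set pats" and q: "q \<in> set pats" and eq: "apply_pattern \<beta> p = apply_pattern \<beta> q"
    have "\<And>j. (j \<in> set p) = (j \<in> set q)"
    proof -
      fix j
      have "apply_pattern \<beta> p j = apply_pattern \<beta> q j" using eq by simp
      thus "(j \<in> set p) = (j \<in> set q)" using pB[OF p] pB[OF q] by (simp add: apply_pattern_distinct) blast
    qed
    then have "set p = set q" by blast
    thus "p = q" using patok p q strict_sorted_equal by metis
  qed
  have finC: "finite (candC B al)" unfolding Cdef by simp
  have cardC: "card (candC B al) = 13" unfolding Cdef using card_image[OF inj] pdist distinct_card by metis
  have nn: "\<And>j. 0 \<le> a j" unfolding a_def by simp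
  have mono: "\<And>i j. i \<le> j \<Longrightarrow> j < B \<Longrightarrow> a i \<le> a j"
    unfolding a_def using inc by (metis le_less order.refl)
  obtain S where S: "S \<subseteq> candC B al" "card S = 8"
      "\<forall>x\<in>S. \<forall>y\<in>candC B al - S. Delta B al x \<le> Delta B al y"
    using select_low[OF finC, of 8 "Delta B al"] cardC by auto
  have "\<forall>v\<in>S. \<forall>w \<in> spc_words B - S. Delta B al v \<le> Delta B al w"
  proof (intro ballI)
    fix v w assume v: "v \<in> S" and w: "w \<in> spc_words B - S"
    show "Delta B al v \<le> Delta B al w"
    proof (cases "w \<in> candC B al")
      case True
      thus ?thesis using S(3) v w by blast
    next
      case False
      define E where "E = {j. j < B \<and> w j \<noteq> \<beta> j}"
      have wb: "w \<in> binvecs B" and wev: "even (hweight B w)" using w by (auto simp: spc_words_def)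
      have EB: "E \<subseteq> {..<B}" unfolding E_def by auto
      have par: "even (card E) \<longleftrightarrow> even (hweight B \<beta>)"
        unfolding E_def using parity[of B w \<beta>] wev by simp
      have DW: "Delta B al w = sum a E" unfolding E_def a_def \<beta>_def using delta_word[OF wb] by simp
      have core: "(\<exists>p\<in>set pats. E = set p) \<or>
         (\<exists>Ps. set Ps \<subseteq> set pats \<and> length Ps = 8 \<and> distinct Ps \<and>
               (\<forall>p\<in>set Ps. sum a (set p) \<le> sum a E))"
      proof (cases "even (hweight B \<beta>)")
        case True
        then show ?thesis unfolding pats_def using core_even[OF nn mono B8 EB] par by simp
      next
        case False
        then show ?thesis unfolding pats_def using core_odd[OF nn mono B8 EB] par by simp
      qed
      show ?thesis
      proof (cases "\<exists>p\<in>set pats. E = set p")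
        case True
        then obtain p where p: "p \<in> set pats" "E = set p" by blast
        have "w = apply_pattern (hard_dec B al) p"
          using word_is_pattern[OF wb, of al p] p pB[OF p(1)] unfolding E_def \<beta>_def by simp
        then have "w \<in> candC B al" unfolding Cdef \<beta>_def using p(1) by simp
        thus ?thesis using False by simp
      next
        case nE: False
        then obtain Ps where Ps: "set Ps \<subseteq> set pats" "length Ps = 8" "distinct Ps"
               "\<forall>p\<in>set Ps. sum a (set p) \<le> sum a E" using core by blast
        define D where "D = apply_pattern \<beta> ` set Ps"
        have DC: "D \<subseteq> candC B al" unfolding D_def Cdef using Ps(1) by auto
        have "inj_on (apply_pattern \<beta>) (set Ps)" using inj Ps(1) inj_on_subset by blast
        then have cD: "card D = 8" unfolding D_def using card_image Ps(2,3) distinct_card by metis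
        have dD: "\<forall>d\<in>D. Delta B al d \<le> Delta B al w"
        proof
          fix d assume "d \<in> D"
          then obtain p where p: "p \<in> set Ps" "d = apply_pattern \<beta> p" unfolding D_def by blast
          have pp: "distinct p" "set p \<subseteq> {..<B}" using pB Ps(1) p(1) by auto
          have "Delta B al d = sum a (set p)" unfolding p(2) \<beta>_def a_def using delta_pattern[OF pp] by simp
          also have "\<dots> \<le> sum a E" using Ps(4) p(1) by blast
          finally show "Delta B al d \<le> Delta B al w" using DW by simp
        qed
        show ?thesis using dom_lemma[OF finC S(1) S(2) S(3) DC cD dD v] .
      qed
    qed
  qed
  thus ?thesis using S(1,2) by blast
qed



theorem proposition2:
  fixes s B :: nat and \<alpha> :: "nat \<Rightarrow> nat \<Rightarrow> real" and PM :: "nat \<Rightarrow> real"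
  assumes "B = 2 ^ s" and "B \<ge> 8"
    and "\<And>l j. l < 8 \<Longrightarrow> j < B \<Longrightarrow> \<alpha> l j \<noteq> 0"
    and "\<And>l i j. l < 8 \<Longrightarrow> i < j \<Longrightarrow> j < B \<Longrightarrow> \<bar>\<alpha> l i\<bar> < \<bar>\<alpha> l j\<bar>"
  shows "(\<forall>l<8. \<exists>S \<subseteq> candC B (\<alpha> l). card S = 8 \<and>
            (\<forall>v\<in>S. \<forall>w \<in> spc_words B - S. Delta B (\<alpha> l) v \<le> Delta B (\<alpha> l) w))
       \<and> (\<exists>T \<subseteq> {(l, v). l < 8 \<and> v \<in> candC B (\<alpha> l)}. card T = 8 \<and>
            (\<forall>(l, v)\<in>T. \<forall>l' w. l' < 8 \<and> w \<in> spc_words B \<and> (l', w) \<notin> T \<longrightarrow>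
               PM l + Delta B (\<alpha> l) v \<le> PM l' + Delta B (\<alpha> l') w))"
proof -
  have P1: "\<forall>l\<in>{..<8}. \<exists>S. S \<subseteq> candC B (\<alpha> l) \<and> card S = 8 \<and>
            (\<forall>v\<in>S. \<forall>w \<in> spc_words B - S. Delta B (\<alpha> l) v \<le> Delta B (\<alpha> l) w)"
  proof
    fix l :: nat assume "l \<in> {..<8}"
    then have l: "l < 8" by simp
    show "\<exists>S. S \<subseteq> candC B (\<alpha> l) \<and> card S = 8 \<and>
            (\<forall>v\<in>S. \<forall>w \<in> spc_words B - S. Delta B (\<alpha> l) v \<le> Delta B (\<alpha> l) w)"
      using path_ok[OF assms(2), of "\<alpha> l"] assms(4)[OF l] by blast
  qed
  obtain Sf where Sf0: "\<forall>l\<in>{..<8}. Sf l \<subseteq> candC B (\<alpha> l) \<and> card (Sf l) = 8 \<and>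
            (\<forall>v\<in>Sf l. \<forall>w \<in> spc_words B - Sf l. Delta B (\<alpha> l) v \<le> Delta B (\<alpha> l) w)"
    using bchoice[OF P1] by (elim exE)
  have Sf: "\<And>l. l \<in> {..<8} \<Longrightarrow> Sf l \<subseteq> candC B (\<alpha> l) \<and> card (Sf l) = 8 \<and>
            (\<forall>v\<in>Sf l. \<forall>w \<in> spc_words B - Sf l. Delta B (\<alpha> l) v \<le> Delta B (\<alpha> l) w)"
    using Sf0 by (rule bspec)
  have part1: "\<forall>l<8. \<exists>S \<subseteq> candC B (\<alpha> l). card S = 8 \<and>
            (\<forall>v\<in>S. \<forall>w \<in> spc_words B - S. Delta B (\<alpha> l) v \<le> Delta B (\<alpha> l) w)"
  proof (intro allI impI)
    fix l :: nat assume "l < 8"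
    then have "l \<in> {..<8}" by simp
    from bspec[OF P1 this] obtain S where "S \<subseteq> candC B (\<alpha> l) \<and> card S = 8 \<and>
            (\<forall>v\<in>S. \<forall>w \<in> spc_words B - S. Delta B (\<alpha> l) v \<le> Delta B (\<alpha> l) w)" by (elim exE)
    then show "\<exists>S \<subseteq> candC B (\<alpha> l). card S = 8 \<and>
            (\<forall>v\<in>S. \<forall>w \<in> spc_words B - S. Delta B (\<alpha> l) v \<le> Delta B (\<alpha> l) w)" by (intro exI)
  qed
  define U where "U = Sigma {..<8::nat} Sf"
  have finS: "finite (Sf l)" if "l < 8" for l
  proof -
    have "card (Sf l) = 8" using Sf[of l] that by simp
    thus ?thesis using card.infinite by fastforce
  qed
  have finU: "finite U" unfolding U_def using finS by (intro finite_SigmaI) auto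
  have "card U = (\<Sum>l<8. card (Sf l))" unfolding U_def using finS by (intro card_SigmaI) auto
  also have "\<dots> = (\<Sum>l<(8::nat). 8)" using Sf by (intro sum.cong) auto
  finally have cardU: "card U = 64" by simp
  define f where "f = (\<lambda>(l::nat, v). PM l + Delta B (\<alpha> l) v)"
  obtain T where T: "T \<subseteq> U" "card T = 8" "\<forall>x\<in>T. \<forall>y\<in>U-T. f x \<le> f y"
    using select_low[OF finU, of 8 f] cardU by auto
  have finT: "finite T" using T(1) finU finite_subset by blast
  have Tsub: "T \<subseteq> {(l, v). l < 8 \<and> v \<in> candC B (\<alpha> l)}"
  proof
    fix x assume "x \<in> T"
    then obtain l v where x: "x = (l, v)" "l < 8" "v \<in> Sf l" using T(1) unfolding U_def by auto
    then have "v \<in> candC B (\<alpha> l)" using Sf[of l] by auto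
    thus "x \<in> {(l, v). l < 8 \<and> v \<in> candC B (\<alpha> l)}" using x by simp
  qed
  have part2: "\<forall>(l, v)\<in>T. \<forall>l' w. l' < 8 \<and> w \<in> spc_words B \<and> (l', w) \<notin> T \<longrightarrow>
               PM l + Delta B (\<alpha> l) v \<le> PM l' + Delta B (\<alpha> l') w"
  proof (intro ballI)
    fix x assume "x \<in> T"
    then obtain l v where xlv: "x = (l, v)" and lv: "(l, v) \<in> T" by (cases x) auto
    have "PM l + Delta B (\<alpha> l) v \<le> PM l' + Delta B (\<alpha> l') w"
      if l': "l' < 8" and w: "w \<in> spc_words B" and nT: "(l', w) \<notin> T" for l' w
    proof -
    have Sl': "Sf l' \<subseteq> candC B (\<alpha> l')" "card (Sf l') = 8"
      "\<forall>v\<in>Sf l'. \<forall>w \<in> spc_words B - Sf l'. Delta B (\<alpha> l') v \<le> Delta B (\<alpha> l') w"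
      using Sf[of l'] l' by auto
    show "PM l + Delta B (\<alpha> l) v \<le> PM l' + Delta B (\<alpha> l') w"
    proof (cases "w \<in> Sf l'")
      case True
      then have "(l', w) \<in> U - T" using nT l' unfolding U_def by auto
      then have "f (l, v) \<le> f (l', w)" using T(3) lv by blast
      thus ?thesis unfolding f_def by simp
    next
      case False
      then have wS: "w \<in> spc_words B - Sf l'" using w by simp
      show ?thesis
      proof (cases "\<exists>v'\<in>Sf l'. (l', v') \<notin> T")
        case True
        then obtain v' where v': "v' \<in> Sf l'" "(l', v') \<notin> T" by blast
        then have "(l', v') \<in> U - T" using l' unfolding U_def by auto
        then have "f (l, v) \<le> f (l', v')" using T(3) lv by blast
        moreover have "Delta B (\<alpha> l') v' \<le> Delta B (\<alpha> l') w" using Sl'(3) v'(1) wS by blast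
        ultimately show ?thesis unfolding f_def by simp
      next
        case False
        then have sub: "{l'} \<times> Sf l' \<subseteq> T" by auto
        have "card ({l'} \<times> Sf l') = 8" using Sl'(2) by (simp add: card_cartesian_product)
        then have "{l'} \<times> Sf l' = T" using card_subset_eq[OF finT sub] T(2) by simp
        then have "l = l'" "v \<in> Sf l'" using lv by auto
        thus ?thesis using Sl'(3) wS by simp
      qed
    qed
    qed
    thus "case x of (l, v) \<Rightarrow> \<forall>l' w. l' < 8 \<and> w \<in> spc_words B \<and> (l', w) \<notin> T \<longrightarrow>
               PM l + Delta B (\<alpha> l) v \<le> PM l' + Delta B (\<alpha> l') w" unfolding xlv by auto
  qed
  have part2': "\<exists>T \<subseteq> {(l, v). l < 8 \<and> v \<in> candC B (\<alpha> l)}. card T = 8 \<and>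
            (\<forall>(l, v)\<in>T. \<forall>l' w. l' < 8 \<and> w \<in> spc_words B \<and> (l', w) \<notin> T \<longrightarrow>
               PM l + Delta B (\<alpha> l) v \<le> PM l' + Delta B (\<alpha> l') w)"
    by (intro exI[of _ T] conjI Tsub T(2) part2)
  show ?thesis by (intro conjI part1 part2')
qed

end
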